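(* As $n\to\infty$ (over integers $n>(p+s)^4$), \[ \max_{0 \leqslant i \leqslant p-1+s} |\rho_{i}| \leqslant 2^{sn} \cdot p^{pn+o(n)}, \] where $|\cdot|$ is the usual absolute value.
   Context: Let $p\geqslant 5$ be a prime and $s$ a positive integer. Write $v_p$ for the $p$-adic valuation and $(\alpha)_k=\alpha(\alpha+1)\cdots(\alpha+k-1)$. Put $N_0=v_p(p-1+s)$ and $M_0=p^{2+N_0}s-1$. For an integer $n>(p+s)^4$ let \[R_n(t)=p^{pn}\, n!^s\, t^{M_0}\,\frac{\prod_{j=1}^{p-1}(t+\frac{j}{p})_n}{(t)_{n+1}^{p-1+s}}\in\mathbb{Q}(t),\] with partial fraction decomposition $R_n(t)=\sum_{i=1}^{p-1+s}\sum_{k=1}^{n} r_{i,k}(t+k)^{-i}$, $r_{i,k}\in\mathbb{Q}$. Set $\rho_i=\sum_{k=1}^n r_{i,k}$ for $1\leqslant i\leqslant p-1+s$, $\rho_{0,j/p}=-\sum_{i=1}^{p-1+s}\sum_{k=1}^n\sum_{\nu=0}^{k-1} r_{i,k}(\nu+\frac{j}{p})^{-i}$ for $1\leqslant j\leqslant p-1$, and $\rho_0=\sum_{j=1}^{p-1}\rho_{0,j/p}$. These depend on $n$. *)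

theory Defs
  imports "HOL-Analysis.Analysis" "HOL-Computational_Algebra.Primes"
begin

definition N0 :: "nat \<Rightarrow> nat \<Rightarrow> nat" where
  "N0 p s = multiplicity p (p - 1 + s)"

definition M0 :: "nat \<Rightarrow> nat \<Rightarrow> nat" where
  "M0 p s = p ^ (2 + N0 p s) * s - 1"

definition Rn :: "nat \<Rightarrow> nat \<Rightarrow> nat \<Rightarrow> real \<Rightarrow> real" where
  "Rn p s n t = real p ^ (p * n) * fact n ^ s * t ^ M0 p s *
     (\<Prod>j=1..p-1. pochhammer (t + real j / real p) n)
     / pochhammer t (n + 1) ^ (p - 1 + s)"

text \<open>The partial fraction coefficients r_{i,k} (1 <= i <= p-1+s, 1 <= k <= n),
  extended by 0 outside this range; they are the unique coefficients with
  R_n(t) = sum r_{i,k} (t+k)^{-i} as rational functions, i.e. for all t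
  outside the poles 0,-1,...,-n.\<close>
definition pfc :: "nat \<Rightarrow> nat \<Rightarrow> nat \<Rightarrow> nat \<Rightarrow> nat \<Rightarrow> real" where
  "pfc p s n = (THE r.
      (\<forall>i k. r i k \<noteq> 0 \<longrightarrow> 1 \<le> i \<and> i \<le> p - 1 + s \<and> 1 \<le> k \<and> k \<le> n) \<and>
      (\<forall>t::real. (\<forall>k\<in>{0..n}. t \<noteq> - real k) \<longrightarrow>
          Rn p s n t = (\<Sum>i=1..p-1+s. \<Sum>k=1..n. r i k / (t + real k) ^ i)))"

definition rho0j :: "nat \<Rightarrow> nat \<Rightarrow> nat \<Rightarrow> nat \<Rightarrow> real" where
  "rho0j p s n j = - (\<Sum>i=1..p-1+s. \<Sum>k=1..n. \<Sum>\<nu><k.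
      pfc p s n i k / (real \<nu> + real j / real p) ^ i)"

definition rho :: "nat \<Rightarrow> nat \<Rightarrow> nat \<Rightarrow> nat \<Rightarrow> real" where
  "rho p s n i = (if i = 0 then (\<Sum>j=1..p-1. rho0j p s n j)
                  else (\<Sum>k=1..n. pfc p s n i k))"

end

theory Submission
  imports Defs "HOL-Complex_Analysis.Complex_Analysis" "HOL-Library.Multiset" "HOL-Real_Asymp.Real_Asymp"
begin



definition pfd :: "'a::field multiset \<Rightarrow> ('a \<Rightarrow> 'a) \<Rightarrow> bool" where
 "pfd M f \<longleftrightarrow> (\<exists>c. \<forall>z. z \<notin># M \<longrightarrow> f z = (\<Sum>a\<in>set_mset M. \<Sum>i=1..count M a. c a i / (z-a)^i))"

lemma pfd_cong: "pfd M f \<Longrightarrow> (\<And>z. z \<notin># M \<Longrightarrow> f z = g z) \<Longrightarrow> pfd M g"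
  unfolding pfd_def by metis

lemma pfd_mono:
  assumes "M1 \<subseteq># M" "pfd M1 f" shows "pfd M f"
proof -
  from assms(2) obtain c where c: "\<And>z. z \<notin># M1 \<Longrightarrow> f z = (\<Sum>a\<in>set_mset M1. \<Sum>i=1..count M1 a. c a i / (z-a)^i)"
    unfolding pfd_def by blast
  define c' where "c' a i = (if i \<le> count M1 a then c a i else 0)" for a i
  have "f z = (\<Sum>a\<in>set_mset M. \<Sum>i=1..count M a. c' a i / (z-a)^i)" if z: "z \<notin># M" for z
  proof -
    have z1: "z \<notin># M1" using z assms(1) by (meson mset_subset_eqD)
    have inner: "(\<Sum>i=1..count M a. c' a i / (z-a)^i) = (\<Sum>i=1..count M1 a. c a i / (z-a)^i)" for a
    proof -
      have le: "count M1 a \<le> count M a" using assms(1) by (simp add: subseteq_mset_def)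
      have "(\<Sum>i=1..count M a. c' a i / (z-a)^i) = (\<Sum>i=1..count M1 a. c' a i / (z-a)^i)"
        by (rule sum.mono_neutral_right) (use le in \<open>auto simp: c'_def\<close>)
      also have "\<dots> = (\<Sum>i=1..count M1 a. c a i / (z-a)^i)"
        by (rule sum.cong) (auto simp: c'_def)
      finally show ?thesis .
    qed
    have "(\<Sum>a\<in>set_mset M. \<Sum>i=1..count M a. c' a i / (z-a)^i) = (\<Sum>a\<in>set_mset M. \<Sum>i=1..count M1 a. c a i / (z-a)^i)"
      using inner by simp
    also have "\<dots> = (\<Sum>a\<in>set_mset M1. \<Sum>i=1..count M1 a. c a i / (z-a)^i)"
      by (rule sum.mono_neutral_right) (use assms(1) in \<open>auto dest: mset_subset_eqD simp: not_in_iff\<close>)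
    finally show ?thesis using c[OF z1] by simp
  qed
  then show ?thesis unfolding pfd_def
    by (intro exI[of _ c']) blast
qed

lemma pfd_add: "pfd M f \<Longrightarrow> pfd M g \<Longrightarrow> pfd M (\<lambda>z. f z + g z)"
proof -
  assume F: "pfd M f" and G: "pfd M g"
  obtain c where c: "\<And>z. z \<notin># M \<Longrightarrow> f z = (\<Sum>a\<in>set_mset M. \<Sum>i=1..count M a. c a i / (z-a)^i)"
    using F unfolding pfd_def by blast
  obtain d where d: "\<And>z. z \<notin># M \<Longrightarrow> g z = (\<Sum>a\<in>set_mset M. \<Sum>i=1..count M a. d a i / (z-a)^i)"
    using G unfolding pfd_def by blast
  have H: "f z + g z = (\<Sum>a\<in>set_mset M. \<Sum>i=1..count M a. (c a i + d a i) / (z-a)^i)" if "z \<notin># M" for z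
    unfolding c[OF that] d[OF that] add_divide_distrib sum.distrib by (rule refl)
  show ?thesis unfolding pfd_def
    by (rule exI[of _ "\<lambda>a i. c a i + d a i"]) (intro allI impI H)
qed

lemma pfd_scale: "pfd M f \<Longrightarrow> pfd M (\<lambda>z. k * f z)"
proof -
  assume F: "pfd M f"
  obtain c where c: "\<And>z. z \<notin># M \<Longrightarrow> f z = (\<Sum>a\<in>set_mset M. \<Sum>i=1..count M a. c a i / (z-a)^i)"
    using F unfolding pfd_def by blast
  have H: "k * f z = (\<Sum>a\<in>set_mset M. \<Sum>i=1..count M a. (k * c a i) / (z-a)^i)" if "z \<notin># M" for z
    unfolding c[OF that] sum_distrib_left times_divide_eq_right by (rule refl)
  show ?thesis unfolding pfd_def
    by (rule exI[of _ "\<lambda>a i. k * c a i"]) (intro allI impI H)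
qed

lemma pfd_single: "m \<ge> 1 \<Longrightarrow> pfd (replicate_mset m a) (\<lambda>z. 1/(z-a)^m)"
proof -
  assume m: "m \<ge> 1"
  define c where "c b i = (if i = m then (1::'a) else 0)" for b :: 'a and i :: nat
  have H: "1/(z-a)^m = (\<Sum>b\<in>set_mset (replicate_mset m a). \<Sum>i=1..count (replicate_mset m a) b. c b i / (z-b)^i)" for z
  proof -
    have "set_mset (replicate_mset m a) = {a}" using m by auto
    moreover have "(\<Sum>i=1..m. c a i / (z-a)^i) = (\<Sum>i\<in>{1..m}. if i = m then 1/(z-a)^i else 0)"
      by (rule sum.cong) (auto simp: c_def)
    moreover have "(\<Sum>i\<in>{1..m}. if i = m then 1/(z-a)^i else 0) = 1/(z-a)^m"
      by (subst sum.delta) (use m in auto)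
    ultimately show ?thesis by simp
  qed
  show ?thesis unfolding pfd_def
    by (rule exI[of _ c]) (intro allI impI H)
qed

abbreviation pm :: "'a::field multiset \<Rightarrow> 'a \<Rightarrow> 'a" where
  "pm M z \<equiv> prod_mset (image_mset (\<lambda>a. z - a) M)"

lemma pm_nz: "z \<notin># M \<Longrightarrow> pm M z \<noteq> 0"
  by (auto simp: prod_mset_zero_iff)

lemma pfd_inv:
  fixes M :: "'a::field multiset"
  shows "M \<noteq> {#} \<Longrightarrow> pfd M (\<lambda>z. 1 / pm M z)"
proof (induction "size M" arbitrary: M rule: less_induct)
  case less
  then obtain a where a: "a \<in># M" by (meson multiset_nonemptyE)
  show ?case
  proof (cases "set_mset M = {a}")
    case True
    define m where "m = size M"
    have M: "M = replicate_mset m a" unfolding m_def using True set_mset_subset_singletonD[of M a] by simp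
    have "m \<ge> 1" unfolding m_def using less.prems by (metis One_nat_def Suc_leI size_eq_0_iff_empty neq0_conv)
    then have "pfd (replicate_mset m a) (\<lambda>z. 1/(z-a)^m)" by (rule pfd_single)
    then show ?thesis by (simp add: M)
  next
    case False
    then obtain b where b: "b \<in># M" "b \<noteq> a" using a by blast
    have b': "b \<in># M - {#a#}" using b by (simp add: in_diff_count)
    define M' where "M' = M - {#a#} - {#b#}"
    have M: "M = add_mset a (add_mset b M')" unfolding M'_def using a b' by (metis insert_DiffM)
    define Ma where "Ma = add_mset a M'"
    define Mb where "Mb = add_mset b M'"
    have "pfd Ma (\<lambda>z. 1 / pm Ma z)" by (rule less.hyps) (auto simp: Ma_def M)
    then have A: "pfd M (\<lambda>z. 1 / pm Ma z)" by (rule pfd_mono[rotated]) (auto simp: Ma_def M)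
    have "pfd Mb (\<lambda>z. 1 / pm Mb z)" by (rule less.hyps) (auto simp: Mb_def M)
    then have B: "pfd M (\<lambda>z. 1 / pm Mb z)" by (rule pfd_mono[rotated]) (auto simp: Mb_def M subset_mset.add_mono)
    have "pfd M (\<lambda>z. (1/(a-b)) * (1 / pm Ma z) + (-(1/(a-b))) * (1 / pm Mb z))"
      by (intro pfd_add pfd_scale A B)
    then show ?thesis
    proof (rule pfd_cong)
      fix z assume z: "z \<notin># M"
      have za: "z - a \<noteq> 0" "z - b \<noteq> 0" "pm M' z \<noteq> 0" using z by (auto simp: M pm_nz)
      have ab: "a - b \<noteq> 0" using b by simp
      have key: "1/d*(1/(x*Q)) + -(1/d)*(1/(y*Q)) = 1/(x*(y*Q))"
        if "x \<noteq> 0" "y \<noteq> 0" "Q \<noteq> 0" "d = y - x" "d \<noteq> 0" for x y Q d :: 'a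
      proof -
        have k1: "1/(x*Q) - 1/(y*Q) = (y-x)/(x*(y*Q))" using that by (simp add: divide_simps)
        have "1/d*(1/(x*Q)) + -(1/d)*(1/(y*Q)) = (1/(x*Q) - 1/(y*Q))/d"
          by (simp add: divide_inverse algebra_simps)
        also have "\<dots> = 1/(x*(y*Q))" using that k1 by simp
        finally show ?thesis .
      qed
      have e: "a - b = (z - b) - (z - a)" by simp
      have pa: "pm Ma z = (z - a) * pm M' z" by (simp add: Ma_def)
      have pb: "pm Mb z = (z - b) * pm M' z" by (simp add: Mb_def)
      have pM: "pm M z = (z - a) * ((z - b) * pm M' z)" by (simp add: M)
      show "(1/(a-b)) * (1 / pm Ma z) + (-(1/(a-b))) * (1 / pm Mb z) = 1 / pm M z"
        unfolding pa pb pM by (rule key[OF za e ab])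
    qed
  qed
qed

lemma pfd_main:
  fixes M N :: "'a::field multiset"
  shows "size N < size M \<Longrightarrow> pfd M (\<lambda>z. pm N z / pm M z)"
proof (induction N arbitrary: M)
  case empty
  then have "M \<noteq> {#}" by auto
  then show ?case using pfd_inv by simp
next
  case (add b N)
  then obtain a where a: "a \<in># M" by (metis multiset_nonemptyE size_empty not_less0)
  define M' where "M' = M - {#a#}"
  have M: "M = add_mset a M'" using a by (simp add: M'_def)
  have "pfd M' (\<lambda>z. pm N z / pm M' z)" by (rule add.IH) (use add.prems in \<open>simp add: M\<close>)
  then have A: "pfd M (\<lambda>z. pm N z / pm M' z)" by (rule pfd_mono[rotated]) (simp add: M)
  have B: "pfd M (\<lambda>z. pm N z / pm M z)" by (rule add.IH) (use add.prems in \<open>simp\<close>)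
  have "pfd M (\<lambda>z. 1 * (pm N z / pm M' z) + (a - b) * (pm N z / pm M z))"
    by (intro pfd_add pfd_scale A B)
  then show ?case
  proof (rule pfd_cong)
    fix z assume z: "z \<notin># M"
    have za: "z - a \<noteq> 0" "pm M' z \<noteq> 0" using z by (auto simp: M pm_nz)
    have key: "R/Q + d*(R/(x*Q)) = ((x + d)*R)/(x*Q)" if "x \<noteq> 0" "Q \<noteq> 0" for x Q R d :: 'a
      using that by (simp add: add_divide_distrib distrib_right)
    have e: "(z - a) + (a - b) = z - b" by simp
    have pM: "pm M z = (z - a) * pm M' z" by (simp add: M)
    have pN: "pm (add_mset b N) z = (z - b) * pm N z" by simp
    show "1 * (pm N z / pm M' z) + (a - b) * (pm N z / pm M z) = pm (add_mset b N) z / pm M z"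
      unfolding pM pN mult_1 using key[OF za, of "pm N z" "a - b", unfolded e] .
  qed
qed



lemma cont_eventually_zero:
  fixes h :: "real \<Rightarrow> real"
  assumes "isCont h x" "\<forall>\<^sub>F t in at x. h t = 0"
  shows "h x = 0"
proof -
  have "(h \<longlongrightarrow> h x) (at x)" using assms(1) by (simp add: isCont_def)
  moreover have "(h \<longlongrightarrow> 0) (at x)" using assms(2) by (simp add: tendsto_eventually)
  ultimately show ?thesis using tendsto_unique[OF at_neq_bot] by blast
qed

lemma pf_unique_real:
  fixes d :: "nat \<Rightarrow> nat \<Rightarrow> real" and P n :: nat
  assumes H: "\<And>t. (\<forall>k\<in>{0..n}. t \<noteq> - real k) \<Longrightarrow> (\<Sum>i=1..P. \<Sum>k=1..n. d i k / (t + real k)^i) = 0"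
  shows "\<forall>i\<in>{1..P}. \<forall>k\<in>{1..n}. d i k = 0"
proof (rule ccontr)
  assume "\<not> ?thesis"
  then obtain i0 k0 where ik0: "i0 \<in> {1..P}" "k0 \<in> {1..n}" "d i0 k0 \<noteq> 0" by blast
  define S where "S = {i\<in>{1..P}. d i k0 \<noteq> 0}"
  have finS: "finite S" and neS: "S \<noteq> {}" using ik0 by (auto simp: S_def)
  define m where "m = Max S"
  have mS: "m \<in> S" using finS neS by (simp add: m_def)
  have m1: "1 \<le> m" "m \<le> P" "d m k0 \<noteq> 0" using mS by (auto simp: S_def)
  have big: "d i k0 = 0" if "i \<in> {1..P}" "i > m" for i
  proof (rule ccontr)
    assume "d i k0 \<noteq> 0"
    then have "i \<in> S" using that by (auto simp: S_def)
    then have "i \<le> m" using finS by (simp add: m_def)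
    then show False using that by simp
  qed
  define K where "K = {1..n} - {k0}"
  define h where "h t = (\<Sum>i=1..P. \<Sum>k\<in>K. d i k * (t + real k0)^m / (t + real k)^i)
      + (\<Sum>i=1..m. d i k0 * (t + real k0)^(m-i))" for t
  have cont: "isCont h (- real k0)"
  proof -
    have nz: "- real k0 + real k \<noteq> 0" if "k \<in> K" for k using that by (auto simp: K_def)
    show ?thesis unfolding h_def
      by (intro continuous_intros) (use nz in auto)
  qed
  have hval: "h (- real k0) = d m k0"
  proof -
    have "(\<Sum>i=1..m. d i k0 * (- real k0 + real k0)^(m-i)) = (\<Sum>i\<in>{1..m}. if i = m then d i k0 else 0)"
      by (rule sum.cong) auto
    also have "\<dots> = d m k0" using m1 by (subst sum.delta) auto
    ultimately show ?thesis unfolding h_def using m1 by (simp add: power_0_left)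
  qed
  have ev: "\<forall>\<^sub>F t in at (- real k0). h t = 0"
    unfolding eventually_at
  proof (intro exI[of _ "1/2"] conjI ballI impI)
    show "(0::real) < 1/2" by simp
    fix t :: real assume "t \<in> UNIV" and t: "t \<noteq> - real k0 \<and> dist t (- real k0) < 1/2"
    have tk: "t + real k0 \<noteq> 0" using t by auto
    have tk': "t \<noteq> - real k" if "k \<noteq> k0" for k
    proof
      assume "t = - real k"
      then have "\<bar>real k0 - real k\<bar> < 1/2" using t by (simp add: dist_real_def)
      then have "\<bar>int k0 - int k\<bar> < 1" by linarith
      then show False using that by linarith
    qed
    have notpole: "\<forall>k\<in>{0..n}. t \<noteq> - real k" using tk tk' by (metis add_eq_0_iff2 add.commute)
    have "0 = (t + real k0)^m * (\<Sum>i=1..P. \<Sum>k=1..n. d i k / (t + real k)^i)"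
      using H[OF notpole] by simp
    also have "\<dots> = (\<Sum>i=1..P. \<Sum>k=1..n. d i k * (t + real k0)^m / (t + real k)^i)"
      by (simp add: sum_distrib_left mult.commute)
    also have "\<dots> = (\<Sum>i=1..P. (\<Sum>k\<in>K. d i k * (t + real k0)^m / (t + real k)^i)
                         + d i k0 * (t + real k0)^m / (t + real k0)^i)"
    proof (rule sum.cong[OF refl])
      fix i
      show "(\<Sum>k=1..n. d i k * (t + real k0)^m / (t + real k)^i)
           = (\<Sum>k\<in>K. d i k * (t + real k0)^m / (t + real k)^i) + d i k0 * (t + real k0)^m / (t + real k0)^i"
        using sum.remove[of "{1..n}" k0 "\<lambda>k. d i k * (t + real k0)^m / (t + real k)^i"] ik0
        by (simp add: K_def add.commute)
    qed
    also have "\<dots> = (\<Sum>i=1..P. \<Sum>k\<in>K. d i k * (t + real k0)^m / (t + real k)^i)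
                   + (\<Sum>i=1..P. d i k0 * (t + real k0)^m / (t + real k0)^i)"
      by (simp add: sum.distrib)
    also have "(\<Sum>i=1..P. d i k0 * (t + real k0)^m / (t + real k0)^i) = (\<Sum>i=1..m. d i k0 * (t + real k0)^(m-i))"
    proof -
      have "(\<Sum>i=1..P. d i k0 * (t + real k0)^m / (t + real k0)^i) = (\<Sum>i=1..m. d i k0 * (t + real k0)^m / (t + real k0)^i)"
        by (rule sum.mono_neutral_right) (use m1 big in auto)
      also have "\<dots> = (\<Sum>i=1..m. d i k0 * (t + real k0)^(m-i))"
      proof (rule sum.cong[OF refl])
        fix i assume "i \<in> {1..m}"
        then have "(t + real k0)^m = (t + real k0)^(m-i) * (t + real k0)^i"
          by (simp flip: power_add)
        then show "d i k0 * (t + real k0)^m / (t + real k0)^i = d i k0 * (t + real k0)^(m-i)"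
          using tk by simp
      qed
      finally show ?thesis .
    qed
    finally show "h t = 0" unfolding h_def by simp
  qed
  have "h (- real k0) = 0" by (rule cont_eventually_zero[OF cont ev])
  then show False using hval m1 by simp
qed



lemma cauchy_coeff:
  fixes F :: "complex \<Rightarrow> complex" and M :: "complex multiset" and c :: "complex \<Rightarrow> nat \<Rightarrow> complex"
  assumes dec: "\<And>z. z \<notin># M \<Longrightarrow> F z = (\<Sum>a\<in>set_mset M. \<Sum>i=1..count M a. c a i / (z-a)^i)"
    and aa: "aa \<in># M" and sep: "\<And>a. a \<in># M \<Longrightarrow> a \<noteq> aa \<Longrightarrow> norm (a - aa) \<ge> 1"
    and i: "1 \<le> i" "i \<le> count M aa"
    and B: "\<And>z. norm (z - aa) = 1/2 \<Longrightarrow> norm (F z) \<le> B"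
  shows "norm (c aa i) \<le> B"
proof -
  define \<gamma> where "\<gamma> = circlepath aa (1/2)"
  have vp: "valid_path \<gamma>" and cl: "pathfinish \<gamma> = pathstart \<gamma>" by (simp_all add: \<gamma>_def)
  have pim: "path_image \<gamma> = sphere aa (1/2)" by (simp add: \<gamma>_def)
  define g where "g a j z = c a j / (z-a)^j * (z-aa)^(i-1)" for a j z
  have tm: "(g a j has_contour_integral (if a = aa \<and> j = i then 2 * pi * \<i> * c aa i else 0)) \<gamma>"
    if a: "a \<in># M" and j: "j \<ge> 1" for a j
  proof (cases "a = aa")
    case False
    have "g a j holomorphic_on ball aa 1"
    proof -
      have "z \<noteq> a" if "z \<in> ball aa 1" for z
        using that sep[OF a False] by (auto simp: dist_norm norm_minus_commute)
      then show ?thesis unfolding g_def by (intro holomorphic_intros) auto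
    qed
    moreover have "path_image \<gamma> \<subseteq> ball aa 1" unfolding pim by auto
    ultimately have "(g a j has_contour_integral 0) \<gamma>"
      using Cauchy_theorem_disc_simple vp cl by blast
    then show ?thesis using False by simp
  next
    case True
    show ?thesis
    proof (cases "j < i")
      case ji: True
      have "((\<lambda>z. c aa j * (z-aa)^(i-1-j)) has_contour_integral 0) \<gamma>"
        by (rule Cauchy_theorem_disc_simple[of _ aa 1]) (use vp cl pim in \<open>auto intro!: holomorphic_intros\<close>)
      then have "(g a j has_contour_integral 0) \<gamma>"
      proof (rule has_contour_integral_eq)
        fix z assume "z \<in> path_image \<gamma>"
        then have z: "z - aa \<noteq> 0" using pim by auto
        have "(z-aa)^(i-1) = (z-aa)^(i-1-j) * (z-aa)^j" using ji by (simp flip: power_add)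
        then show "c aa j * (z-aa)^(i-1-j) = g a j z" unfolding g_def True using z by simp
      qed
      then show ?thesis using ji by simp
    next
      case ji: False
      have hc: "((\<lambda>u. c aa j / (u-aa)^(Suc (j-i))) has_contour_integral
               ((2 * pi * \<i>) / (fact (j-i)) * (deriv ^^ (j-i)) (\<lambda>w. c aa j) aa)) \<gamma>"
        unfolding \<gamma>_def by (rule Cauchy_has_contour_integral_higher_derivative_circlepath) auto
      have "(g a j has_contour_integral ((2 * pi * \<i>) / (fact (j-i)) * (deriv ^^ (j-i)) (\<lambda>w. c aa j) aa)) \<gamma>"
        using hc
      proof (rule has_contour_integral_eq)
        fix z assume "z \<in> path_image \<gamma>"
        then have z: "z - aa \<noteq> 0" using pim by auto
        have e: "j = Suc (j-i) + (i-1)" using ji i by simp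
        have "(z-aa)^j = (z-aa)^(Suc (j-i)) * (z-aa)^(i-1)" by (metis e power_add)
        then show "c aa j / (z-aa)^(Suc (j-i)) = g a j z" unfolding g_def True using z by simp
      qed
      then show ?thesis using ji True by (auto simp: higher_deriv_const)
    qed
  qed
  have "((\<lambda>z. \<Sum>a\<in>set_mset M. \<Sum>j=1..count M a. g a j z) has_contour_integral
        (\<Sum>a\<in>set_mset M. \<Sum>j=1..count M a. (if a = aa \<and> j = i then 2 * pi * \<i> * c aa i else 0))) \<gamma>"
    by (intro has_contour_integral_sum tm) auto
  moreover have "(\<Sum>a\<in>set_mset M. \<Sum>j=1..count M a. (if a = aa \<and> j = i then 2 * pi * \<i> * c aa i else 0))
      = 2 * pi * \<i> * c aa i"
  proof -
    have "(\<Sum>a\<in>set_mset M. \<Sum>j=1..count M a. (if a = aa \<and> j = i then 2 * pi * \<i> * c aa i else 0))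
        = (\<Sum>a\<in>set_mset M. if a = aa then 2 * pi * \<i> * c aa i else 0)"
    proof (rule sum.cong[OF refl])
      fix a assume "a \<in> set_mset M"
      show "(\<Sum>j=1..count M a. (if a = aa \<and> j = i then 2 * pi * \<i> * c aa i else 0))
          = (if a = aa then 2 * pi * \<i> * c aa i else 0)"
        using i by (cases "a = aa") (auto simp: sum.delta)
    qed
    also have "\<dots> = 2 * pi * \<i> * c aa i" using aa by (simp add: sum.delta)
    finally show ?thesis .
  qed
  ultimately have I1: "((\<lambda>z. \<Sum>a\<in>set_mset M. \<Sum>j=1..count M a. g a j z) has_contour_integral (2 * pi * \<i> * c aa i)) \<gamma>"
    by simp
  have I2: "((\<lambda>z. F z * (z-aa)^(i-1)) has_contour_integral (2 * pi * \<i> * c aa i)) \<gamma>"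
    using I1
  proof (rule has_contour_integral_eq)
    fix z assume "z \<in> path_image \<gamma>"
    then have zd: "norm (z - aa) = 1/2" using pim by (auto simp: dist_norm norm_minus_commute)
    have "z \<notin># M"
    proof
      assume "z \<in># M"
      show False
      proof (cases "z = aa")
        case True then show False using zd by simp
      next
        case False then show False using sep[OF \<open>z \<in># M\<close>] zd by simp
      qed
    qed
    then show "(\<Sum>a\<in>set_mset M. \<Sum>j=1..count M a. g a j z) = F z * (z-aa)^(i-1)"
      unfolding dec[OF \<open>z \<notin># M\<close>] g_def by (simp add: sum_distrib_right)
  qed
  have B0: "0 \<le> B" using B[of "aa + 1/2"] norm_ge_zero[of "F (aa + 1/2)"] by (simp del: norm_ge_zero)
  have "norm (2 * pi * \<i> * c aa i) \<le> (B * (1/2)^(i-1)) * (2 * pi * (1/2))"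
  proof (rule has_contour_integral_bound_circlepath[OF I2[unfolded \<gamma>_def]])
    show "0 \<le> B * (1/2)^(i-1)" using B0 by simp
    show "0 < (1/2::real)" by simp
    fix z assume zd: "norm (z - aa) = 1/2"
    have "norm (F z * (z-aa)^(i-1)) = norm (F z) * (1/2)^(i-1)" by (simp only: norm_mult norm_power zd)
    also have "\<dots> \<le> B * (1/2)^(i-1)" using B[OF zd] by (intro mult_right_mono) auto
    finally show "norm (F z * (z-aa)^(i-1)) \<le> B * (1/2)^(i-1)" .
  qed
  then have "2 * pi * norm (c aa i) \<le> pi * (B * (1/2)^(i-1))" by (simp add: norm_mult)
  then have "norm (c aa i) \<le> B * (1/2)^(i-1) / 2" using pi_gt_zero by (simp add: field_simps)
  also have "\<dots> \<le> B"
  proof -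
    have "(1/2::real)^(i-1) \<le> 1" by (rule power_le_one) auto
    then have "B * (1/2)^(i-1) \<le> B * 1" using B0 by (intro mult_left_mono) auto
    then show ?thesis using B0 by simp
  qed
  finally show ?thesis .
qed



lemma half_lower0: "fact K \<le> real (K+1) * (\<Prod>d=1..K. real d - 1/2)"
proof (induction K)
  case 0 then show ?case by simp
next
  case (Suc K)
  have P0: "0 \<le> (\<Prod>d=1..K. real d - 1/2)" by (auto intro!: prod_nonneg)
  have "fact (Suc K) = (real K + 1) * fact K" by simp
  also have "\<dots> \<le> (real K + 1) * (real (K+1) * (\<Prod>d=1..K. real d - 1/2))"
    by (rule mult_left_mono[OF Suc.IH]) simp
  also have "\<dots> = (real K + 1)^2 * (\<Prod>d=1..K. real d - 1/2)" by (simp add: power2_eq_square)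
  also have "\<dots> \<le> ((real K + 2) * (real K + 1/2)) * (\<Prod>d=1..K. real d - 1/2)"
    by (rule mult_right_mono[OF _ P0]) (simp add: power2_eq_square algebra_simps)
  also have "\<dots> = real (Suc K + 1) * ((\<Prod>d=1..K. real d - 1/2) * (real (Suc K) - 1/2))"
  proof -
    have "\<And>X::real. (real K + 2) * (real K + 1/2) * X = (real K + 2) * (X * (real K + 1/2))" by simp
    then show ?thesis by (simp add: add.commute)
  qed
  also have "\<dots> = real (Suc K + 1) * (\<Prod>d=1..Suc K. real d - 1/2)" by simp
  finally show ?case .
qed

lemma half_lower: "fact K / real (K+1) \<le> (\<Prod>d=1..K. real d - 1/2)"
  using half_lower0[of K] by (simp add: divide_le_eq mult.commute)

lemma up1: "(\<Prod>d=1..K. real d + 1/2) \<le> fact (K+1)"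
proof (induction K)
  case 0 then show ?case by simp
next
  case (Suc K)
  have "(\<Prod>d=1..Suc K. real d + 1/2) = (\<Prod>d=1..K. real d + 1/2) * (real K + 3/2)" by simp
  also have "\<dots> \<le> fact (K+1) * (real K + 2)"
    by (rule mult_mono[OF Suc.IH]) (auto intro: prod_nonneg)
  also have "\<dots> = fact (Suc K + 1)" by (simp add: algebra_simps)
  finally show ?case .
qed

lemma up2: "(\<Prod>e<K. real e + 2) \<le> fact (K+1)"
proof (induction K)
  case 0 then show ?case by simp
next
  case (Suc K)
  have "(\<Prod>e<Suc K. real e + 2) = (\<Prod>e<K. real e + 2) * (real K + 2)" by simp
  also have "\<dots> \<le> fact (K+1) * (real K + 2)"
    by (rule mult_right_mono[OF Suc.IH]) auto
  also have "\<dots> = fact (Suc K + 1)" by (simp add: algebra_simps)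
  finally show ?case .
qed

lemma split_den:
  fixes f :: "nat \<Rightarrow> 'a::comm_monoid_mult"
  assumes "k0 \<in> {1..n}"
  shows "(\<Prod>k\<in>{1..n}-{k0}. f k) = (\<Prod>d=1..k0-1. f (k0 - d)) * (\<Prod>d=1..n-k0. f (k0 + d))"
proof -
  have U: "{1..n}-{k0} = {1..<k0} \<union> {k0<..n}" using assms by auto
  have "(\<Prod>k\<in>{1..n}-{k0}. f k) = (\<Prod>k\<in>{1..<k0}. f k) * (\<Prod>k\<in>{k0<..n}. f k)"
    unfolding U by (rule prod.union_disjoint) auto
  moreover have "(\<Prod>k\<in>{1..<k0}. f k) = (\<Prod>d=1..k0-1. f (k0 - d))"
    by (rule prod.reindex_bij_witness[of _ "\<lambda>k. k0 - k" "\<lambda>d. k0 - d"]) auto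
  moreover have "(\<Prod>k\<in>{k0<..n}. f k) = (\<Prod>d=1..n-k0. f (k0 + d))"
    by (rule prod.reindex_bij_witness[of _ "\<lambda>d. k0 + d" "\<lambda>k. k - k0"]) auto
  ultimately show ?thesis by simp
qed

lemma split_num:
  fixes f :: "nat \<Rightarrow> 'a::comm_monoid_mult"
  assumes "k0 \<le> n"
  shows "(\<Prod>m<n. f m) = (\<Prod>d=1..k0. f (k0 - d)) * (\<Prod>e<n-k0. f (k0 + e))"
proof -
  have U: "{..<n} = {..<k0} \<union> {k0..<n}" using assms by auto
  have "(\<Prod>m<n. f m) = (\<Prod>m\<in>{..<k0}. f m) * (\<Prod>m\<in>{k0..<n}. f m)"
    unfolding U by (rule prod.union_disjoint) auto
  moreover have "(\<Prod>m\<in>{..<k0}. f m) = (\<Prod>d=1..k0. f (k0 - d))"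
    by (rule prod.reindex_bij_witness[of _ "\<lambda>m. k0 - m" "\<lambda>d. k0 - d"]) auto
  moreover have "(\<Prod>m\<in>{k0..<n}. f m) = (\<Prod>e<n-k0. f (k0 + e))"
    by (rule prod.reindex_bij_witness[of _ "\<lambda>e. k0 + e" "\<lambda>m. m - k0"]) auto
  ultimately show ?thesis by simp
qed

lemma G_lower:
  assumes k0: "k0 \<in> {1..n}"
  shows "fact (k0-1) / real k0 * (fact (n-k0) / real (n-k0+1))
         \<le> (\<Prod>k\<in>{1..n}-{k0}. \<bar>real k - real k0\<bar> - 1/2)"
proof -
  have "(\<Prod>k\<in>{1..n}-{k0}. \<bar>real k - real k0\<bar> - 1/2)
      = (\<Prod>d=1..k0-1. \<bar>real (k0 - d) - real k0\<bar> - 1/2) * (\<Prod>d=1..n-k0. \<bar>real (k0 + d) - real k0\<bar> - 1/2)"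
    by (rule split_den[OF k0])
  also have "(\<Prod>d=1..k0-1. \<bar>real (k0 - d) - real k0\<bar> - 1/2) = (\<Prod>d=1..k0-1. real d - 1/2)"
    by (rule prod.cong) (auto simp: of_nat_diff)
  also have "(\<Prod>d=1..n-k0. \<bar>real (k0 + d) - real k0\<bar> - 1/2) = (\<Prod>d=1..n-k0. real d - 1/2)"
    by (rule prod.cong) auto
  finally have eq: "(\<Prod>k\<in>{1..n}-{k0}. \<bar>real k - real k0\<bar> - 1/2)
      = (\<Prod>d=1..k0-1. real d - 1/2) * (\<Prod>d=1..n-k0. real d - 1/2)" .
  have h1: "fact (k0-1) / real k0 \<le> (\<Prod>d=1..k0-1. real d - 1/2)"
    using half_lower[of "k0-1"] k0 by simp
  have h2: "fact (n-k0) / real (n-k0+1) \<le> (\<Prod>d=1..n-k0. real d - 1/2)"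
    using half_lower[of "n-k0"] by simp
  show ?thesis unfolding eq
    by (rule mult_mono[OF h1 h2]) (auto intro!: divide_nonneg_nonneg prod_nonneg)
qed

lemma num_upper:
  fixes x :: real
  assumes k0: "k0 \<le> n" and x: "0 \<le> x" "x \<le> 1"
  shows "(\<Prod>m<n. \<bar>real m + x - real k0\<bar> + 1/2) \<le> fact (k0+1) * fact (n-k0+1)"
proof -
  have "(\<Prod>m<n. \<bar>real m + x - real k0\<bar> + 1/2)
      = (\<Prod>d=1..k0. \<bar>real (k0 - d) + x - real k0\<bar> + 1/2) * (\<Prod>e<n-k0. \<bar>real (k0 + e) + x - real k0\<bar> + 1/2)"
    by (rule split_num[OF k0])
  also have "\<dots> \<le> (\<Prod>d=1..k0. real d + 1/2) * (\<Prod>e<n-k0. real e + 2)"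
  proof (rule mult_mono)
    show "(\<Prod>d=1..k0. \<bar>real (k0 - d) + x - real k0\<bar> + 1/2) \<le> (\<Prod>d=1..k0. real d + 1/2)"
      by (rule prod_mono) (use x in \<open>auto simp: of_nat_diff\<close>)
    show "(\<Prod>e<n-k0. \<bar>real (k0 + e) + x - real k0\<bar> + 1/2) \<le> (\<Prod>e<n-k0. real e + 2)"
      by (rule prod_mono) (use x in auto)
  qed (auto intro: prod_nonneg)
  also have "\<dots> \<le> fact (k0+1) * fact (n-k0+1)"
    by (rule mult_mono[OF up1 up2]) (auto intro: prod_nonneg)
  finally show ?thesis .
qed




definition DD :: "nat \<Rightarrow> nat \<Rightarrow> nat" where "DD p s = M0 p s - (p - 1 + s)"
definition CC :: "nat \<Rightarrow> nat \<Rightarrow> nat \<Rightarrow> real" where "CC p s n = real p ^ (p*n) * fact n ^ s"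
definition SS :: "nat \<Rightarrow> nat \<Rightarrow> (nat \<times> nat) set" where "SS p n = {1..p-1} \<times> {..<n}"
definition xv :: "nat \<Rightarrow> nat \<times> nat \<Rightarrow> real" where "xv p jm = real (snd jm) + real (fst jm) / real p"
definition Fg :: "nat \<Rightarrow> nat \<Rightarrow> nat \<Rightarrow> 'a::real_normed_field \<Rightarrow> 'a" where
  "Fg p s n z = of_real (CC p s n) * z ^ DD p s * (\<Prod>x\<in>SS p n. z + of_real (xv p x))
                 / (\<Prod>k=1..n. (z + of_nat k) ^ (p - 1 + s))"

lemma M0_ge:
  assumes "p \<ge> 5" "s \<ge> 1"
  shows "p - 1 + s \<le> M0 p s"
proof -
  have "p ^ 2 \<le> p ^ (2 + N0 p s)" using assms by (intro power_increasing) auto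
  then have "p^2 * s \<le> p ^ (2 + N0 p s) * s" by simp
  moreover have "p + s \<le> p^2 * s"
  proof -
    have "p + s \<le> p * s + p * s" using assms by (intro add_mono) auto
    also have "\<dots> = 2 * (p * s)" by simp
    also have "\<dots> \<le> p * (p * s)" using assms by (intro mult_right_mono) auto
    finally show ?thesis by (simp add: power2_eq_square mult.assoc)
  qed
  ultimately show ?thesis unfolding M0_def using assms by linarith
qed

lemma M0_lt:
  assumes "prime p" "p \<ge> 5" "s \<ge> 1"
  shows "M0 p s < (p + s) ^ 4"
proof -
  have dv: "p ^ N0 p s dvd (p - 1 + s)" unfolding N0_def by (rule multiplicity_dvd)
  have "p ^ N0 p s \<le> p - 1 + s" using dvd_imp_le[OF dv] assms by auto
  then have "p ^ N0 p s \<le> p + s" by simp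
  moreover have "p ^ (2 + N0 p s) = p^2 * p ^ N0 p s" by (simp only: power_add)
  ultimately have "p ^ (2 + N0 p s) * s \<le> (p^2 * (p + s)) * s"
    by (metis mult_le_mono1 mult_le_mono2)
  also have "\<dots> \<le> ((p+s)^2 * (p+s)) * (p+s)"
    by (intro mult_mono power_mono) auto
  also have "\<dots> = (p+s)^4" by (simp add: power2_eq_square power4_eq_xxxx)
  finally have "p ^ (2 + N0 p s) * s \<le> (p+s)^4" .
  moreover have "p ^ (2 + N0 p s) * s \<ge> 1" using assms by simp
  ultimately show ?thesis unfolding M0_def by linarith
qed

lemma poch_shift: "pochhammer (t::real) (n+1) = t * (\<Prod>k=1..n. t + real k)"
proof -
  have "pochhammer t (n+1) = t * (\<Prod>i\<in>{0..<n}. t + real (Suc i))"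
    unfolding pochhammer_prod by (simp add: prod.atLeast0_lessThan_Suc_shift del: prod.op_ivl_Suc)
  also have "(\<Prod>i\<in>{0..<n}. t + real (Suc i)) = (\<Prod>k=1..n. t + real k)"
    by (rule prod.reindex_bij_witness[of _ "\<lambda>k. k - 1" "Suc"]) auto
  finally show ?thesis .
qed

lemma poch_SS: "(\<Prod>j=1..p-1. pochhammer (t + real j / real p) n) = (\<Prod>x\<in>SS p n. t + xv p x)"
proof -
  have "(\<Prod>j=1..p-1. pochhammer (t + real j / real p) n) = (\<Prod>j=1..p-1. \<Prod>m<n. t + xv p (j, m))"
    unfolding pochhammer_prod xv_def by (intro prod.cong refl) (auto simp: atLeast0LessThan algebra_simps)
  also have "\<dots> = (\<Prod>x\<in>SS p n. t + xv p x)"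
    unfolding SS_def by (subst prod.cartesian_product) (simp add: case_prod_beta)
  finally show ?thesis .
qed

lemma Rn_eq:
  assumes "p \<ge> 5" "s \<ge> 1" and t0: "t \<noteq> 0" and tk: "\<forall>k\<in>{1..n}. t + real k \<noteq> 0"
  shows "Rn p s n t = Fg p s n t"
proof -
  define P where "P = p - 1 + s"
  define W where "W = (\<Prod>k=1..n. t + real k)"
  have M0: "M0 p s = DD p s + P" using M0_ge[OF assms(1,2)] by (simp add: DD_def P_def)
  have W0: "W \<noteq> 0" using tk by (simp add: W_def)
  have "Rn p s n t = CC p s n * (t ^ DD p s * t ^ P) * (\<Prod>x\<in>SS p n. t + xv p x) / (t ^ P * W ^ P)"
    unfolding Rn_def CC_def poch_SS poch_shift M0 power_add P_def W_def power_mult_distrib by simp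
  also have "\<dots> = CC p s n * t ^ DD p s * (\<Prod>x\<in>SS p n. t + xv p x) / W ^ P"
    using t0 W0 by (simp add: field_simps)
  also have "W ^ P = (\<Prod>k=1..n. (t + real k) ^ P)" unfolding W_def by (rule prod_power_distrib)
  finally show ?thesis unfolding Fg_def P_def by simp
qed

lemma Fg_of_real: "Fg p s n (complex_of_real t) = complex_of_real (Fg p s n t)"
  unfolding Fg_def by (simp add: of_real_prod)


definition NN :: "nat \<Rightarrow> nat \<Rightarrow> nat \<Rightarrow> complex multiset" where
  "NN p s n = replicate_mset (DD p s) 0 + (\<Sum>x\<in>SS p n. {# - of_real (xv p x) #})"
definition MM :: "nat \<Rightarrow> nat \<Rightarrow> nat \<Rightarrow> complex multiset" where
  "MM p s n = (\<Sum>k\<in>{1..n}. replicate_mset (p - 1 + s) (- of_nat k))"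

lemma pm_sum: "finite A \<Longrightarrow> pm (\<Sum>a\<in>A. f a) z = (\<Prod>a\<in>A. pm (f a) z)"
  by (induct A rule: finite_induct) auto

lemma size_sum': "finite A \<Longrightarrow> size (\<Sum>a\<in>A. (f a :: 'b multiset)) = (\<Sum>a\<in>A. size (f a))"
  by (induct A rule: finite_induct) auto

lemma finite_SS: "finite (SS p n)" by (simp add: SS_def)

lemma pm_NN: "pm (NN p s n) z = z ^ DD p s * (\<Prod>x\<in>SS p n. z + of_real (xv p x))"
  unfolding NN_def by (simp add: pm_sum finite_SS)

lemma pm_MM: "pm (MM p s n) z = (\<Prod>k=1..n. (z + of_nat k) ^ (p-1+s))"
  unfolding MM_def by (simp add: pm_sum)

lemma size_NN: "size (NN p s n) = DD p s + (p-1)*n"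
  unfolding NN_def by (simp add: size_sum' finite_SS) (simp add: SS_def card_cartesian_product)

lemma size_MM: "size (MM p s n) = n * (p-1+s)"
  unfolding MM_def by (simp add: size_sum')

lemma count_MM:
  assumes "k0 \<in> {1..n}" shows "count (MM p s n) (- of_nat k0) = p - 1 + s"
proof -
  have "count (MM p s n) (- of_nat k0) = (\<Sum>k\<in>{1..n}. if k = k0 then p - 1 + s else 0)"
    unfolding MM_def count_sum by (intro sum.cong refl) auto
  also have "\<dots> = p - 1 + s" using assms by (subst sum.delta) auto
  finally show ?thesis .
qed

lemma set_MM: "p - 1 + s \<ge> 1 \<Longrightarrow> set_mset (MM p s n) = (\<lambda>k. - of_nat k) ` {1..n}"
  unfolding MM_def by (auto simp: set_mset_sum)

lemma Fg_pm: "Fg p s n (z::complex) = of_real (CC p s n) * (pm (NN p s n) z / pm (MM p s n) z)"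
  unfolding Fg_def pm_NN pm_MM by simp

lemma pfd_Fg:
  assumes "prime p" "p \<ge> 5" "s \<ge> 1" "n > (p+s)^4"
  shows "pfd (MM p s n) (Fg p s n)"
proof -
  have "DD p s \<le> M0 p s" by (simp add: DD_def)
  also have "\<dots> < (p+s)^4" by (rule M0_lt[OF assms(1-3)])
  also have "\<dots> < n" by (rule assms(4))
  also have "\<dots> \<le> n * s" using assms by simp
  finally have "DD p s < n * s" .
  moreover have "n * (p - 1 + s) = n * (p-1) + n * s" by (rule add_mult_distrib2)
  ultimately have "size (NN p s n) < size (MM p s n)" unfolding size_NN size_MM
    by (simp add: mult.commute)
  then have "pfd (MM p s n) (\<lambda>z. pm (NN p s n) z / pm (MM p s n) z)" by (rule pfd_main)
  then have "pfd (MM p s n) (\<lambda>z. of_real (CC p s n) * (pm (NN p s n) z / pm (MM p s n) z))" by (rule pfd_scale)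
  then show ?thesis by (rule pfd_cong) (simp add: Fg_pm)
qed


lemma ratio1:
  assumes k0: "k0 \<in> {1..n}"
  shows "2 * (fact (k0+1) * fact (n-k0+1)) / (fact (k0-1) / real k0 * (fact (n-k0) / real (n-k0+1)))
         \<le> 2 * (real n + 1) ^ 5"
proof -
  define A :: real where "A = fact (k0-1)"
  define B :: real where "B = fact (n-k0)"
  have A0: "A > 0" and B0: "B > 0" by (simp_all add: A_def B_def)
  have fk: "fact (k0+1) = (real k0 + 1) * real k0 * A"
  proof -
    have "k0 = Suc (k0 - 1)" using k0 by simp
    then have "fact k0 = real k0 * A" unfolding A_def by (metis fact_Suc of_nat_Suc diff_Suc_1)
    then show ?thesis by (simp add: algebra_simps)
  qed
  have fn: "fact (n-k0+1) = (real (n-k0) + 1) * B" unfolding B_def by simp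
  have k0p: "real k0 > 0" using k0 by simp
  have e: "2 * (fact (k0+1) * fact (n-k0+1)) / (A / real k0 * (B / real (n-k0+1)))
        = 2 * ((real k0 + 1) * real k0 * real k0 * (real (n-k0) + 1) * (real (n-k0) + 1))"
    unfolding fk fn using A0 B0 k0p by (simp add: field_simps)
  have b1: "real k0 + 1 \<le> real n + 1" "real k0 \<le> real n + 1" "real (n-k0) + 1 \<le> real n + 1"
    using k0 by auto
  have "(real k0 + 1) * real k0 * real k0 * (real (n-k0) + 1) * (real (n-k0) + 1)
      \<le> (real n + 1) * (real n + 1) * (real n + 1) * (real n + 1) * (real n + 1)"
    using b1 by (intro mult_mono) auto
  then show ?thesis unfolding A_def[symmetric] B_def[symmetric] e
    by (simp add: power_def numeral_eq_Suc mult_ac)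
qed

lemma ratio2:
  assumes k0: "k0 \<in> {1..n}"
  shows "2 * fact n / (fact (k0-1) / real k0 * (fact (n-k0) / real (n-k0+1)))
         \<le> 2 * (2 ^ n * (real n + 1) ^ 3)"
proof -
  define A :: real where "A = fact (k0-1)"
  define B :: real where "B = fact (n-k0)"
  define Cb :: real where "Cb = real (n choose k0)"
  have A0: "A > 0" and B0: "B > 0" by (simp_all add: A_def B_def)
  have fk: "fact k0 = real k0 * A"
  proof -
    have "k0 = Suc (k0 - 1)" using k0 by simp
    then show ?thesis unfolding A_def by (metis fact_Suc of_nat_Suc diff_Suc_1)
  qed
  have fn: "fact n = Cb * (real k0 * A) * B"
  proof -
    have "fact k0 * fact (n - k0) * (n choose k0) = fact n" using k0 by (intro binomial_fact_lemma) auto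
    then have "(fact n :: real) = of_nat (fact k0 * fact (n - k0) * (n choose k0))" by (metis of_nat_fact)
    then show ?thesis unfolding Cb_def B_def fk[symmetric] by (simp add: of_nat_fact mult_ac)
  qed
  have k0p: "real k0 > 0" using k0 by simp
  have e: "2 * fact n / (A / real k0 * (B / real (n-k0+1)))
        = 2 * (Cb * (real k0 * real k0 * (real (n-k0) + 1)))"
    unfolding fn using A0 B0 k0p by (simp add: field_simps)
  have Cb: "Cb \<le> 2 ^ n" unfolding Cb_def
    by (metis binomial_le_pow2 of_nat_le_iff of_nat_numeral of_nat_power)
  have b1: "real k0 \<le> real n + 1" "real (n-k0) + 1 \<le> real n + 1"
    using k0 by auto
  have ineq: "Cb * (real k0 * real k0 * (real (n-k0) + 1)) \<le> 2 ^ n * ((real n + 1) * (real n + 1) * (real n + 1))"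
    using b1 Cb by (intro mult_mono) (auto simp: Cb_def)
  have cube: "(real n + 1)^3 = (real n + 1) * (real n + 1) * (real n + 1)" by (simp add: power3_eq_cube)
  show ?thesis unfolding A_def[symmetric] B_def[symmetric] e cube
    by (rule mult_left_mono[OF ineq]) simp
qed


lemma Fg_bound:
  fixes z :: complex
  assumes p5: "p \<ge> 5" and s1: "s \<ge> 1" and k0: "k0 \<in> {1..n}" and zc: "norm (z + of_nat k0) = 1/2"
  shows "norm (Fg p s n z) \<le> real p ^ (p*n) * 2 ^ (s*n) * (2 ^ (p-1+s) * (real n + 1) ^ (DD p s + 5*(p-1) + 3* s))"
proof -
  define P where "P = p - 1 + s"
  define L :: real where "L = fact (k0-1) / real k0 * (fact (n-k0) / real (n-k0+1))"
  define U :: real where "U = fact (k0+1) * fact (n-k0+1)"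
  define N1 :: real where "N1 = real n + 1"
  have L0: "L > 0" using k0 by (simp add: L_def)
  have U0: "U \<ge> 0" by (simp add: U_def)
  have nz: "norm z \<le> N1"
  proof -
    have "norm z = norm ((z + of_nat k0) - of_nat k0)" by simp
    also have "\<dots> \<le> norm (z + of_nat k0) + norm (of_nat k0 :: complex)" by (rule norm_triangle_ineq4)
    also have "\<dots> \<le> N1" using zc k0 by (simp add: N1_def)
    finally show ?thesis .
  qed
  have num: "(\<Prod>x\<in>SS p n. norm (z + of_real (xv p x))) \<le> U ^ (p-1)"
  proof -
    have "(\<Prod>x\<in>SS p n. norm (z + of_real (xv p x))) \<le> (\<Prod>x\<in>SS p n. \<bar>xv p x - real k0\<bar> + 1/2)"
    proof (rule prod_mono)
      fix x assume "x \<in> SS p n"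
      have "norm (z + of_real (xv p x)) = norm ((z + of_nat k0) + of_real (xv p x - real k0))" by simp
      also have "\<dots> \<le> norm (z + of_nat k0) + norm (of_real (xv p x - real k0) :: complex)" by (rule norm_triangle_ineq)
      also have "\<dots> = \<bar>xv p x - real k0\<bar> + 1/2" unfolding zc norm_of_real by simp
      finally show "0 \<le> norm (z + of_real (xv p x)) \<and> norm (z + of_real (xv p x)) \<le> \<bar>xv p x - real k0\<bar> + 1/2" by simp
    qed
    also have "(\<Prod>x\<in>SS p n. \<bar>xv p x - real k0\<bar> + 1/2) = (\<Prod>j=1..p-1. \<Prod>m<n. \<bar>real m + real j / real p - real k0\<bar> + 1/2)"
      unfolding SS_def xv_def by (subst prod.cartesian_product) (simp add: case_prod_beta)
    also have "\<dots> \<le> (\<Prod>j=1..p-1. U)"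
    proof (rule prod_mono)
      fix j assume j: "j \<in> {1..p-1}"
      have "j \<le> p" using j by auto
      then have "real j / real p \<le> 1" using p5 by (simp add: divide_le_eq)
      then have "(\<Prod>m<n. \<bar>real m + real j / real p - real k0\<bar> + 1/2) \<le> U"
        unfolding U_def using k0 by (intro num_upper) auto
      then show "0 \<le> (\<Prod>m<n. \<bar>real m + real j / real p - real k0\<bar> + 1/2) \<and>
            (\<Prod>m<n. \<bar>real m + real j / real p - real k0\<bar> + 1/2) \<le> U"
        by (auto intro: prod_nonneg)
    qed
    also have "\<dots> = U ^ (p-1)" by simp
    finally show ?thesis .
  qed
  have den: "L / 2 \<le> (\<Prod>k=1..n. norm (z + of_nat k))"
  proof -
    have "(\<Prod>k=1..n. norm (z + of_nat k)) = norm (z + of_nat k0) * (\<Prod>k\<in>{1..n}-{k0}. norm (z + of_nat k))"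
      using k0 by (subst prod.remove[of _ k0]) auto
    also have "\<dots> = 1/2 * (\<Prod>k\<in>{1..n}-{k0}. norm (z + of_nat k))" using zc by simp
    finally have e: "(\<Prod>k=1..n. norm (z + of_nat k)) = 1/2 * (\<Prod>k\<in>{1..n}-{k0}. norm (z + of_nat k))" .
    have "L \<le> (\<Prod>k\<in>{1..n}-{k0}. \<bar>real k - real k0\<bar> - 1/2)" unfolding L_def by (rule G_lower[OF k0])
    also have "\<dots> \<le> (\<Prod>k\<in>{1..n}-{k0}. norm (z + of_nat k))"
    proof (rule prod_mono)
      fix k assume k: "k \<in> {1..n}-{k0}"
      then have "\<bar>real k - real k0\<bar> \<ge> 1" by (auto simp: abs_if)
      moreover have "\<bar>real k - real k0\<bar> - norm (z + of_nat k0) \<le> norm (z + of_nat k)"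
      proof -
        have e3: "of_real (real k - real k0) + (z + of_nat k0) = z + of_nat k" by simp
        show ?thesis using norm_diff_ineq[of "of_real (real k - real k0) :: complex" "z + of_nat k0"]
          unfolding e3 norm_of_real .
      qed
      ultimately show "0 \<le> \<bar>real k - real k0\<bar> - 1/2 \<and> \<bar>real k - real k0\<bar> - 1/2 \<le> norm (z + of_nat k)"
        using zc by simp
    qed
    finally show ?thesis unfolding e by simp
  qed
  have "norm (Fg p s n z) = CC p s n * norm z ^ DD p s * (\<Prod>x\<in>SS p n. norm (z + of_real (xv p x)))
          / (\<Prod>k=1..n. norm (z + of_nat k)) ^ P"
    unfolding Fg_def P_def by (simp add: norm_mult norm_divide prod_norm[symmetric] norm_power prod_power_distrib CC_def)
  also have "\<dots> \<le> CC p s n * N1 ^ DD p s * U ^ (p-1) / (L/2) ^ P"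
  proof (rule frac_le)
    show "0 \<le> CC p s n * N1 ^ DD p s * U ^ (p-1)" using U0 by (intro mult_nonneg_nonneg) (auto simp: CC_def N1_def)
    show "CC p s n * norm z ^ DD p s * (\<Prod>x\<in>SS p n. norm (z + of_real (xv p x))) \<le> CC p s n * N1 ^ DD p s * U ^ (p-1)"
      by (intro mult_mono mult_left_mono power_mono nz num) (auto simp: CC_def N1_def intro!: prod_nonneg mult_nonneg_nonneg)
    show "0 < (L/2) ^ P" using L0 by simp
    show "(L/2) ^ P \<le> (\<Prod>k=1..n. norm (z + of_nat k)) ^ P" using den L0 by (intro power_mono) auto
  qed
  also have "\<dots> = real p ^ (p*n) * N1 ^ DD p s * (2 * U / L) ^ (p-1) * (2 * fact n / L) ^ s"
  proof -
    have "(L/2) ^ P = (L/2)^(p-1) * (L/2)^s" unfolding P_def by (simp add: power_add)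
    then show ?thesis unfolding CC_def using L0
      by (simp add: power_divide field_simps power_mult_distrib)
  qed
  also have "\<dots> \<le> real p ^ (p*n) * N1 ^ DD p s * (2 * N1 ^ 5) ^ (p-1) * (2 * (2 ^ n * N1 ^ 3)) ^ s"
  proof -
    have r1: "2 * U / L \<le> 2 * N1 ^ 5" unfolding U_def L_def N1_def using ratio1[OF k0] by simp
    have r2: "2 * fact n / L \<le> 2 * (2 ^ n * N1 ^ 3)" unfolding L_def N1_def using ratio2[OF k0] by simp
    have "0 \<le> 2 * U / L" "0 \<le> 2 * fact n / L" using U0 L0 by auto
    then show ?thesis using r1 r2
      by (intro mult_mono mult_left_mono power_mono) (auto simp: N1_def)
  qed
  also have "\<dots> = real p ^ (p*n) * 2 ^ (s*n) * (2 ^ (p-1+s) * N1 ^ (DD p s + 5*(p-1) + 3* s))"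
    by (simp add: power_mult_distrib power_add power_mult[symmetric] mult_ac)
  finally show ?thesis unfolding N1_def .
qed


definition Bnd :: "nat \<Rightarrow> nat \<Rightarrow> nat \<Rightarrow> real" where
  "Bnd p s n = real p ^ (p*n) * 2 ^ (s*n) * (2 ^ (p-1+s) * (real n + 1) ^ (DD p s + 5*(p-1) + 3 * s))"

lemma Bnd_nonneg: "0 \<le> Bnd p s n" by (simp add: Bnd_def)

lemma pfc_bound:
  assumes pr: "prime p" and p5: "p \<ge> 5" and s1: "s \<ge> 1" and nb: "n > (p+s)^4"
  shows "\<bar>pfc p s n i k\<bar> \<le> Bnd p s n"
proof -
  define P where "P = p - 1 + s"
  have P1: "P \<ge> 1" using s1 by (simp add: P_def)
  obtain c where c: "\<And>z. z \<notin># MM p s n \<Longrightarrow> Fg p s n z =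
      (\<Sum>a\<in>set_mset (MM p s n). \<Sum>i=1..count (MM p s n) a. c a i / (z-a)^i)"
    using pfd_Fg[OF pr p5 s1 nb] unfolding pfd_def by blast
  have setM: "set_mset (MM p s n) = (\<lambda>k. - of_nat k) ` {1..n}" using P1 unfolding P_def by (rule set_MM)
  define r where "r i k = (if 1 \<le> i \<and> i \<le> P \<and> 1 \<le> k \<and> k \<le> n then Re (c (- of_nat k) i) else 0)" for i k
  have supp: "\<forall>i k. r i k \<noteq> 0 \<longrightarrow> 1 \<le> i \<and> i \<le> p - 1 + s \<and> 1 \<le> k \<and> k \<le> n"
    by (auto simp: r_def P_def split: if_splits)
  have decr: "Rn p s n t = (\<Sum>i=1..p-1+s. \<Sum>k=1..n. r i k / (t + real k)^i)"
    if t: "\<forall>k\<in>{0..n}. t \<noteq> - real k" for t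
  proof -
    have t0: "t \<noteq> 0" using t by force
    have tk: "\<forall>k\<in>{1..n}. t + real k \<noteq> 0" using t by force
    define z where "z = complex_of_real t"
    have zM: "z \<notin># MM p s n"
    proof
      assume "z \<in># MM p s n"
      then obtain k where k: "k \<in> {1..n}" "z = - of_nat k" using setM by auto
      then have "complex_of_real (t + real k) = 0" unfolding z_def by simp
      then have "t + real k = 0" by (simp only: of_real_eq_0_iff)
      then show False using tk k by auto
    qed
    have "Fg p s n z = (\<Sum>a\<in>(\<lambda>k. - of_nat k) ` {1..n}. \<Sum>i=1..count (MM p s n) a. c a i / (z-a)^i)"
      using c[OF zM] setM by simp
    also have "\<dots> = (\<Sum>k=1..n. \<Sum>i=1..count (MM p s n) (- of_nat k). c (- of_nat k) i / (z + of_nat k)^i)"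
      by (subst sum.reindex) (auto simp: inj_on_def)
    also have "\<dots> = (\<Sum>k=1..n. \<Sum>i=1..P. c (- of_nat k) i / (z + of_nat k)^i)"
      by (intro sum.cong refl) (simp add: count_MM P_def)
    finally have F1: "Fg p s n z = (\<Sum>k=1..n. \<Sum>i=1..P. c (- of_nat k) i / (z + of_nat k)^i)" .
    have "Rn p s n t = Fg p s n t" by (rule Rn_eq[OF p5 s1 t0 tk])
    also have "\<dots> = Re (Fg p s n z)" unfolding z_def Fg_of_real by simp
    also have "\<dots> = (\<Sum>k=1..n. \<Sum>i=1..P. Re (c (- of_nat k) i) / (t + real k)^i)"
    proof -
      have "(z + of_nat k)^i = complex_of_real ((t + real k)^i)" for k i unfolding z_def by simp
      then show ?thesis unfolding F1 by (simp add: Re_sum Re_divide_of_real)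
    qed
    also have "\<dots> = (\<Sum>i=1..P. \<Sum>k=1..n. Re (c (- of_nat k) i) / (t + real k)^i)" by (rule sum.swap)
    also have "\<dots> = (\<Sum>i=1..p-1+s. \<Sum>k=1..n. r i k / (t + real k)^i)"
      unfolding P_def by (intro sum.cong refl) (auto simp: r_def P_def)
    finally show ?thesis .
  qed
  have pfc_eq: "pfc p s n = r"
    unfolding pfc_def
  proof (rule the_equality)
    show "(\<forall>i k. r i k \<noteq> 0 \<longrightarrow> 1 \<le> i \<and> i \<le> p - 1 + s \<and> 1 \<le> k \<and> k \<le> n) \<and>
      (\<forall>t. (\<forall>k\<in>{0..n}. t \<noteq> - real k) \<longrightarrow> Rn p s n t = (\<Sum>i=1..p-1+s. \<Sum>k=1..n. r i k / (t + real k)^i))"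
      using supp decr by blast
  next
    fix r' assume H: "(\<forall>i k. r' i k \<noteq> 0 \<longrightarrow> 1 \<le> i \<and> i \<le> p - 1 + s \<and> 1 \<le> k \<and> k \<le> n) \<and>
      (\<forall>t. (\<forall>k\<in>{0..n}. t \<noteq> - real k) \<longrightarrow> Rn p s n t = (\<Sum>i=1..p-1+s. \<Sum>k=1..n. r' i k / (t + real k)^i))"
    have Z: "\<forall>i\<in>{1..p-1+s}. \<forall>k\<in>{1..n}. r' i k - r i k = 0"
    proof (rule pf_unique_real)
      fix t :: real assume t: "\<forall>k\<in>{0..n}. t \<noteq> - real k"
      have "(\<Sum>i=1..p-1+s. \<Sum>k=1..n. (r' i k - r i k) / (t + real k)^i)
          = (\<Sum>i=1..p-1+s. \<Sum>k=1..n. r' i k / (t + real k)^i) - (\<Sum>i=1..p-1+s. \<Sum>k=1..n. r i k / (t + real k)^i)"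
        by (simp add: diff_divide_distrib sum_subtractf)
      also have "\<dots> = 0" using H decr[OF t] t by simp
      finally show "(\<Sum>i=1..p-1+s. \<Sum>k=1..n. (r' i k - r i k) / (t + real k)^i) = 0" .
    qed
    show "r' = r"
    proof (intro ext)
      fix i k
      show "r' i k = r i k"
      proof (cases "1 \<le> i \<and> i \<le> p - 1 + s \<and> 1 \<le> k \<and> k \<le> n")
        case True then show ?thesis using Z by auto
      next
        case False
        then have "r' i k = 0" using H by blast
        moreover have "r i k = 0" using False supp by blast
        ultimately show ?thesis by simp
      qed
    qed
  qed
  show ?thesis
  proof (cases "1 \<le> i \<and> i \<le> P \<and> 1 \<le> k \<and> k \<le> n")
    case False
    have "r i k = 0" unfolding r_def by (rule if_not_P[OF False])
    then show ?thesis unfolding pfc_eq using Bnd_nonneg by simp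
  next
    case True
    have kin: "k \<in> {1..n}" using True by simp
    have cnt: "count (MM p s n) (- of_nat k) = P" using count_MM[OF kin] by (simp add: P_def)
    have "norm (c (- of_nat k) i) \<le> Bnd p s n"
    proof (rule cauchy_coeff[where F = "Fg p s n" and M = "MM p s n" and c = c and aa = "- of_nat k" and i = i])
      show "\<And>z. z \<notin># MM p s n \<Longrightarrow> Fg p s n z = (\<Sum>a\<in>set_mset (MM p s n). \<Sum>i=1..count (MM p s n) a. c a i / (z-a)^i)"
        by (rule c)
      show "- of_nat k \<in># MM p s n" using kin setM by auto
      show "1 \<le> norm (a - - of_nat k)" if aM: "a \<in># MM p s n" and an: "a \<noteq> - of_nat k" for a
      proof -
        obtain k' where k': "k' \<in> {1..n}" "a = - of_nat k'" using aM setM by auto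
        have "k' \<noteq> k" using k' an by auto
        then have "1 \<le> \<bar>real k - real k'\<bar>" by (auto simp: abs_if)
        moreover have "a - - of_nat k = complex_of_real (real k - real k')" using k' by simp
        ultimately show ?thesis by (simp only: norm_of_real)
      qed
      show "1 \<le> i" "i \<le> count (MM p s n) (- of_nat k)" using True cnt by auto
      show "norm (Fg p s n z) \<le> Bnd p s n" if "norm (z - - of_nat k) = 1/2" for z :: complex
      proof -
        have "norm (z + of_nat k) = 1/2" using that by simp
        from Fg_bound[OF p5 s1 kin this] show ?thesis unfolding Bnd_def by simp
      qed
    qed
    then have "\<bar>Re (c (- of_nat k) i)\<bar> \<le> Bnd p s n" using abs_Re_le_cmod order_trans by blast
    then show ?thesis unfolding pfc_eq r_def using True by simp
  qed
qed


lemma inv_pow_le: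
  assumes p5: "p \<ge> 5" and j: "j \<in> {1..p-1}" and i: "i \<le> P"
  shows "1 / (real \<nu> + real j / real p) ^ i \<le> real p ^ P"
proof -
  define x where "x = real \<nu> + real j / real p"
  have "real j \<ge> 1" using j by simp
  then have "1 / real p \<le> real j / real p" using p5 by (intro divide_right_mono) auto
  moreover have "0 \<le> real \<nu>" by simp
  ultimately have x1: "x \<ge> 1 / real p" unfolding x_def by linarith
  have "1 / real p > 0" using p5 by simp
  then have xp: "x > 0" using x1 by linarith
  have "1 / x \<le> real p" using x1 xp p5 by (simp add: divide_le_eq mult.commute)
  then have "1 / x ^ i \<le> real p ^ i" using xp by (simp add: power_one_over[symmetric] power_mono)
  also have "\<dots> \<le> real p ^ P" using p5 i by (intro power_increasing) auto
  finally show ?thesis unfolding x_def .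
qed

lemma rho_bound:
  assumes pr: "prime p" and p5: "p \<ge> 5" and s1: "s \<ge> 1" and nb: "n > (p+s)^4" and i: "i \<in> {0..p-1+s}"
  shows "\<bar>rho p s n i\<bar> \<le> real (p-1) * real (p-1+s) * real p ^ (p-1+s) * (real n + 1)^2 * Bnd p s n"
proof -
  define P where "P = p - 1 + s"
  define B where "B = Bnd p s n"
  have B0: "B \<ge> 0" by (simp add: B_def Bnd_nonneg)
  have pb: "\<And>i k. \<bar>pfc p s n i k\<bar> \<le> B" unfolding B_def by (rule pfc_bound[OF pr p5 s1 nb])
  have K1: "1 \<le> real (p-1) * real P * real p ^ P"
  proof -
    have "1 \<le> real (p-1)" "1 \<le> real P" "1 \<le> real p ^ P" using p5 s1 by (auto simp: P_def)
    then show ?thesis by (metis mult_mono' mult_1 order_trans zero_le_one mult_le_cancel_left1 less_le_not_le)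
  qed
  show ?thesis
  proof (cases "i = 0")
    case False
    have "\<bar>rho p s n i\<bar> = \<bar>\<Sum>k=1..n. pfc p s n i k\<bar>" using False by (simp add: rho_def)
    also have "\<dots> \<le> (\<Sum>k=1..n. \<bar>pfc p s n i k\<bar>)" by (rule sum_abs)
    also have "\<dots> \<le> (\<Sum>k=1..n. B)" by (intro sum_mono pb)
    also have "\<dots> = real n * B" by simp
    also have "\<dots> \<le> (real (p-1) * real P * real p ^ P) * ((real n + 1)^2 * B)"
    proof -
      have "real n \<le> (real n + 1)^2" by (simp add: power2_eq_square algebra_simps)
      then have "real n * B \<le> (real n + 1)^2 * B" using B0 by (intro mult_right_mono) auto
      also have "\<dots> \<le> (real (p-1) * real P * real p ^ P) * ((real n + 1)^2 * B)"
      proof -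
        have X0: "0 \<le> (real n + 1)^2 * B" using B0 by simp
        from mult_right_mono[OF K1 X0] show ?thesis by simp
      qed
      finally show ?thesis .
    qed
    finally show ?thesis unfolding P_def B_def by (simp add: mult_ac)
  next
    case True
    have r0j: "\<bar>rho0j p s n j\<bar> \<le> real P * real n * real n * (real p ^ P * B)" if j: "j \<in> {1..p-1}" for j
    proof -
      have "\<bar>rho0j p s n j\<bar> = \<bar>\<Sum>i=1..P. \<Sum>k=1..n. \<Sum>\<nu><k. pfc p s n i k / (real \<nu> + real j / real p) ^ i\<bar>"
        unfolding rho0j_def P_def by simp
      also have "\<dots> \<le> (\<Sum>i=1..P. \<Sum>k=1..n. \<Sum>\<nu><k. \<bar>pfc p s n i k / (real \<nu> + real j / real p) ^ i\<bar>)"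
        by (rule order_trans[OF sum_abs sum_mono], rule order_trans[OF sum_abs sum_mono], rule sum_abs)
      also have "\<dots> \<le> (\<Sum>i=1..P. \<Sum>k=1..n. \<Sum>\<nu><k. real p ^ P * B)"
      proof (intro sum_mono)
        fix i k \<nu> assume iP: "i \<in> {1..P}"
        have "\<bar>pfc p s n i k / (real \<nu> + real j / real p) ^ i\<bar> = \<bar>pfc p s n i k\<bar> * (1 / (real \<nu> + real j / real p) ^ i)"
          by (simp add: abs_mult abs_divide)
        also have "\<dots> \<le> B * real p ^ P"
          using pb inv_pow_le[OF p5 j, of i P \<nu>] iP B0 by (intro mult_mono) auto
        finally show "\<bar>pfc p s n i k / (real \<nu> + real j / real p) ^ i\<bar> \<le> real p ^ P * B" by (simp add: mult.commute)
      qed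
      also have "\<dots> \<le> (\<Sum>i=1..P. \<Sum>k=1..n. real n * (real p ^ P * B))"
      proof (intro sum_mono)
        fix i k assume "k \<in> {1..n}"
        then show "(\<Sum>\<nu><k. real p ^ P * B) \<le> real n * (real p ^ P * B)"
          using B0 by (simp add: mult_right_mono)
      qed
      also have "\<dots> = real P * real n * real n * (real p ^ P * B)" by simp
      finally show ?thesis .
    qed
    have "\<bar>rho p s n i\<bar> = \<bar>\<Sum>j=1..p-1. rho0j p s n j\<bar>" using True by (simp add: rho_def)
    also have "\<dots> \<le> (\<Sum>j=1..p-1. \<bar>rho0j p s n j\<bar>)" by (rule sum_abs)
    also have "\<dots> \<le> (\<Sum>j=1..p-1. real P * real n * real n * (real p ^ P * B))" by (intro sum_mono r0j) auto
    also have "\<dots> = real (p-1) * real P * real p ^ P * (real n * real n) * B" by simp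
    also have "\<dots> \<le> real (p-1) * real P * real p ^ P * (real n + 1)^2 * B"
      using B0 by (intro mult_right_mono mult_left_mono) (auto simp: power2_eq_square intro: mult_mono)
    finally show ?thesis unfolding P_def B_def .
  qed
qed


lemma asym: "0 < e \<Longrightarrow> 1 < (q::real) \<Longrightarrow> ((\<lambda>n::nat. C * (real n + 1)^E / q powr (e * real n)) \<longlongrightarrow> 0) at_top"
  by real_asymp

theorem lemma7p1:
  fixes p s :: nat
  assumes "prime p" and "p \<ge> 5" and "s \<ge> 1"
  shows "\<forall>\<epsilon>>0. \<forall>\<^sub>F n in sequentially. n > (p + s) ^ 4 \<longrightarrow>
           Max ((\<lambda>i. \<bar>rho p s n i\<bar>) ` {0..p-1+s})
             \<le> 2 ^ (s * n) * real p powr (real (p * n) + \<epsilon> * real n)"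
proof (intro allI impI)
  fix \<epsilon> :: real assume \<epsilon>: "\<epsilon> > 0"
  define P where "P = p - 1 + s"
  define E where "E = DD p s + 5*(p-1) + 3 * s"
  define K where "K = real (p-1) * real P * real p ^ P * 2 ^ P"
  have q1: "1 < real p" using assms by simp
  have ev: "\<forall>\<^sub>F n in sequentially. K * (real n + 1)^(E+2) / real p powr (\<epsilon> * real n) < 1"
    using order_tendstoD(2)[OF asym[OF \<epsilon> q1, of K "E+2"] zero_less_one] by simp
  show "\<forall>\<^sub>F n in sequentially. n > (p + s) ^ 4 \<longrightarrow>
           Max ((\<lambda>i. \<bar>rho p s n i\<bar>) ` {0..p-1+s})
             \<le> 2 ^ (s * n) * real p powr (real (p * n) + \<epsilon> * real n)"
  proof (rule eventually_mono[OF ev], intro impI)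
    fix n assume h: "K * (real n + 1)^(E+2) / real p powr (\<epsilon> * real n) < 1" and nb: "(p+s)^4 < n"
    have pw: "real p powr (\<epsilon> * real n) > 0" using q1 by simp
    have h2: "K * (real n + 1)^(E+2) \<le> real p powr (\<epsilon> * real n)"
      using h pw by (simp add: divide_less_eq)
    have bnd: "\<bar>rho p s n i\<bar> \<le> 2^(s*n) * real p^(p*n) * (K * (real n + 1)^(E+2))" if i: "i \<in> {0..p-1+s}" for i
    proof -
      have "\<bar>rho p s n i\<bar> \<le> real (p-1) * real (p-1+s) * real p ^ (p-1+s) * (real n + 1)^2 * Bnd p s n"
        by (rule rho_bound[OF assms nb i])
      also have "\<dots> = 2^(s*n) * real p^(p*n) * (K * (real n + 1)^(E+2))"
        unfolding Bnd_def K_def E_def P_def by (simp add: power_add power2_eq_square mult_ac)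
      finally show ?thesis .
    qed
    have fin: "2^(s*n) * real p^(p*n) * (K * (real n + 1)^(E+2)) \<le> 2 ^ (s * n) * real p powr (real (p * n) + \<epsilon> * real n)"
    proof -
      have pp: "real p powr real (p * n) = real p ^ (p*n)" using q1 by (intro powr_realpow) simp
      have eqp: "real p powr (real (p * n) + \<epsilon> * real n) = real p ^ (p*n) * real p powr (\<epsilon> * real n)"
        by (simp only: powr_add pp)
      have m: "real p ^ (p*n) * (K * (real n + 1)^(E+2)) \<le> real p ^ (p*n) * real p powr (\<epsilon> * real n)"
        using h2 by (intro mult_left_mono) auto
      have "2^(s*n) * real p^(p*n) * (K * (real n + 1)^(E+2)) = 2^(s*n) * (real p^(p*n) * (K * (real n + 1)^(E+2)))"
        by (simp only: mult.assoc)
      also have "\<dots> \<le> 2^(s*n) * (real p ^ (p*n) * real p powr (\<epsilon> * real n))"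
        by (rule mult_left_mono[OF m]) simp
      also have "\<dots> = 2 ^ (s * n) * real p powr (real (p * n) + \<epsilon> * real n)" by (simp only: eqp)
      finally show ?thesis .
    qed
    show "Max ((\<lambda>i. \<bar>rho p s n i\<bar>) ` {0..p-1+s}) \<le> 2 ^ (s * n) * real p powr (real (p * n) + \<epsilon> * real n)"
    proof (subst Max_le_iff)
      show "finite ((\<lambda>i. \<bar>rho p s n i\<bar>) ` {0..p-1+s})" by simp
      show "(\<lambda>i. \<bar>rho p s n i\<bar>) ` {0..p-1+s} \<noteq> {}" by simp
      show "\<forall>a\<in>(\<lambda>i. \<bar>rho p s n i\<bar>) ` {0..p-1+s}. a \<le> 2 ^ (s * n) * real p powr (real (p * n) + \<epsilon> * real n)"
      proof
        fix a assume "a \<in> (\<lambda>i. \<bar>rho p s n i\<bar>) ` {0..p-1+s}"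
        then obtain i where i: "i \<in> {0..p-1+s}" and a: "a = \<bar>rho p s n i\<bar>" by blast
        show "a \<le> 2 ^ (s * n) * real p powr (real (p * n) + \<epsilon> * real n)"
          unfolding a by (rule order_trans[OF bnd[OF i] fin])
      qed
    qed
  qed
qed


end
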